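(* Let $V\subset\mathbb{R}^d$ be a finite antichain and $p\in S_V$. If $p$ is a syzygy-point, then $p$ is a characteristic point.
   Context: For $x,y\in\mathbb{R}^d$, $x\le y$ (dominance order) means $x_i\le y_i$ for all $i$; $y\rhd x$ means $y_i>x_i$ for all $i$; $y\rhd_i x$ means $y_i=x_i$ and $y_j>x_j$ for all $j\neq i$. $V\subset\mathbb{R}^d$ is a finite antichain in the dominance order. The orthogonal surface $S_V$ is the topological boundary of $\langle V\rangle=\{x: x\ge v\text{ for some }v\in V\}$. Flats: $U_i(v)=\{p\in S_V: p\rhd_i v\}$; for $v,w\in V$ put $v\sim_i w$ iff $U_i(v)\cap U_i(w)\neq\emptyset$, and let $\sim_i^c$ be the reflexive–transitive closure; the $i$-flat of $v$ is $F_i(v)=\overline{\bigcup_{w\sim_i^c v}U_i(w)}$, and an $i$-flat is any set of this form. A characteristic point is a point of $S_V$ that lies in some $i$-flat for every $i\in\{1,\dots,d\}$. For $p\in S_V$ let $\Delta_p$ be the simplicial complex on $\{1,\dots,d\}$ with $I\in\Delta_p$ iff $p+\epsilon\sum_{i\in I}e_i\in S_V$ for some $\epsilon>0$ ($e_i$ the standard unit vectors). $p$ is a syzygy-point if $\Delta_p$ has non-trivial (reduced) homology. *)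

theory Defs
  imports "HOL-Analysis.Analysis"
begin

text \<open>Points of R^d are vectors of type real^'n, d = CARD('n). The index type is
  additionally linearly ordered; the order is only used to orient simplices when
  defining simplicial (reduced) homology, which does not depend on this choice.\<close>

definition dom_le :: "real^'n \<Rightarrow> real^'n \<Rightarrow> bool" where
  "dom_le x y \<longleftrightarrow> (\<forall>i. x$i \<le> y$i)"

definition dom_gt :: "real^'n \<Rightarrow> real^'n \<Rightarrow> bool" where
  "dom_gt y x \<longleftrightarrow> (\<forall>i. y$i > x$i)"

definition dom_gt_i :: "'n \<Rightarrow> real^'n \<Rightarrow> real^'n \<Rightarrow> bool" where
  "dom_gt_i i y x \<longleftrightarrow> y$i = x$i \<and> (\<forall>j. j \<noteq> i \<longrightarrow> y$j > x$j)"

definition antichain_dom :: "(real^'n) set \<Rightarrow> bool" where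
  "antichain_dom V \<longleftrightarrow> (\<forall>v\<in>V. \<forall>w\<in>V. dom_le v w \<longrightarrow> v = w)"

definition generated :: "(real^'n) set \<Rightarrow> (real^'n) set" where
  "generated V = {x. \<exists>v\<in>V. dom_le v x}"

definition orth_surface :: "(real^'n) set \<Rightarrow> (real^'n) set" where
  "orth_surface V = frontier (generated V)"

definition U_flat :: "(real^'n) set \<Rightarrow> 'n \<Rightarrow> real^'n \<Rightarrow> (real^'n) set" where
  "U_flat V i v = {p \<in> orth_surface V. dom_gt_i i p v}"

definition sim_i :: "(real^'n) set \<Rightarrow> 'n \<Rightarrow> real^'n \<Rightarrow> real^'n \<Rightarrow> bool" where
  "sim_i V i v w \<longleftrightarrow> v \<in> V \<and> w \<in> V \<and> U_flat V i v \<inter> U_flat V i w \<noteq> {}"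

definition i_flat_of :: "(real^'n) set \<Rightarrow> 'n \<Rightarrow> real^'n \<Rightarrow> (real^'n) set" where
  "i_flat_of V i v = closure (\<Union> {U_flat V i w | w. w \<in> V \<and> (sim_i V i)\<^sup>*\<^sup>* w v})"

definition is_i_flat :: "(real^'n) set \<Rightarrow> 'n \<Rightarrow> (real^'n) set \<Rightarrow> bool" where
  "is_i_flat V i F \<longleftrightarrow> (\<exists>v\<in>V. F = i_flat_of V i v)"

definition characteristic_point :: "(real^'n) set \<Rightarrow> real^'n \<Rightarrow> bool" where
  "characteristic_point V p \<longleftrightarrow>
     p \<in> orth_surface V \<and> (\<forall>i. \<exists>F. is_i_flat V i F \<and> p \<in> F)"

definition Delta_p :: "(real^'n) set \<Rightarrow> real^'n \<Rightarrow> 'n set set" where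
  "Delta_p V p = {I. \<exists>\<epsilon>>0. p + \<epsilon> *\<^sub>R (\<Sum>i\<in>I. axis i 1) \<in> orth_surface V}"

text \<open>Simplicial chains with integer coefficients: an n-chain assigns an integer to
  each face with n vertices (i.e. dimension n-1); the face with 0 vertices (the empty
  face) gives the augmentation, so the resulting complex computes reduced homology.\<close>

definition sc_chain :: "'n set set \<Rightarrow> nat \<Rightarrow> ('n set \<Rightarrow> int) \<Rightarrow> bool" where
  "sc_chain K n c \<longleftrightarrow> (\<forall>\<sigma>. c \<sigma> \<noteq> 0 \<longrightarrow> \<sigma> \<in> K \<and> card \<sigma> = n)"

definition sc_boundary :: "('n::{finite,linorder} set \<Rightarrow> int) \<Rightarrow> 'n set \<Rightarrow> int" where
  "sc_boundary c \<sigma> = (\<Sum>j\<in>UNIV - \<sigma>. (-1) ^ card {i\<in>\<sigma>. i < j} * c (insert j \<sigma>))"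

definition nontrivial_reduced_homology :: "'n::{finite,linorder} set set \<Rightarrow> bool" where
  "nontrivial_reduced_homology K \<longleftrightarrow>
     (\<exists>n c. sc_chain K n c \<and> sc_boundary c = (\<lambda>_. 0) \<and>
            \<not> (\<exists>b. sc_chain K (Suc n) b \<and> sc_boundary b = c))"

definition syzygy_point :: "(real^('n::{finite,linorder})) set \<Rightarrow> real^('n::{finite,linorder}) \<Rightarrow> bool" where
  "syzygy_point V p \<longleftrightarrow> p \<in> orth_surface V \<and> nontrivial_reduced_homology (Delta_p V p)"

end

theory Submission
  imports Defs
begin

definition epsg :: "'n::{finite,linorder} \<Rightarrow> 'n set \<Rightarrow> int" where
  "epsg j s = (-1) ^ card {k\<in>s. k < j}"

definition hcone :: "'n::{finite,linorder} \<Rightarrow> ('n set \<Rightarrow> int) \<Rightarrow> 'n set \<Rightarrow> int" where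
  "hcone i c s = (if i \<in> s then epsg i s * c (s - {i}) else 0)"

lemma epsg_sq: "epsg j s * epsg j s = 1"
  by (simp add: epsg_def power_add[symmetric])

lemma epsg_ins_self: "epsg i (insert i s) = epsg i s"
proof -
  have "{k\<in>insert i s. k < i} = {k\<in>s. k < i}" by auto
  thus ?thesis by (simp add: epsg_def)
qed

lemma epsg_rem_self: "epsg i (s - {i}) = epsg i s"
proof -
  have "{k\<in>s - {i}. k < i} = {k\<in>s. k < i}" by auto
  thus ?thesis by (simp add: epsg_def)
qed

lemma epsg_swap:
  fixes i j :: "'n::{finite,linorder}"
  assumes "i \<in> s" "j \<notin> s"
  shows "epsg j s * epsg i (insert j s) = - (epsg i s * epsg j (s - {i}))"
proof -
  define A where "A = {k\<in>s - {i}. k < j}"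
  define B where "B = {k\<in>s - {i}. k < i}"
  have ij: "i \<noteq> j" using assms by auto
  have fA: "finite A" "finite B" by auto
  have e1: "epsg i s = (-1) ^ card B"
    unfolding epsg_def B_def by (metis epsg_def epsg_rem_self)
  have e2: "epsg j (s - {i}) = (-1) ^ card A" unfolding epsg_def A_def by simp
  show ?thesis
  proof (cases "i < j")
    case True
    have "{k\<in>s. k < j} = insert i A" using True assms unfolding A_def by auto
    hence a: "epsg j s = - ((-1) ^ card A)" using fA unfolding epsg_def A_def by simp
    have "{k\<in>insert j s. k < i} = B" using True assms unfolding B_def by auto
    hence b: "epsg i (insert j s) = (-1) ^ card B" unfolding epsg_def by simp
    show ?thesis using a b e1 e2 by simp
  next
    case False
    hence ji: "j < i" using ij by auto
    have "{k\<in>s. k < j} = A" using ji assms unfolding A_def by auto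
    hence a: "epsg j s = (-1) ^ card A" unfolding epsg_def by simp
    have "{k\<in>insert j s. k < i} = insert j B" using ji assms unfolding B_def by auto
    hence b: "epsg i (insert j s) = - ((-1) ^ card B)" using fA assms unfolding epsg_def B_def by simp
    show ?thesis using a b e1 e2 by simp
  qed
qed

lemma bd_eq: "sc_boundary c s = (\<Sum>j\<in>UNIV - s. epsg j s * c (insert j s))"
  by (simp add: sc_boundary_def epsg_def)

lemma hcone_bd:
  fixes c :: "'n::{finite,linorder} set \<Rightarrow> int"
  assumes cyc: "sc_boundary c = (\<lambda>_. 0)"
  shows "sc_boundary (hcone i c) = c"
proof
  fix s :: "'n set"
  show "sc_boundary (hcone i c) s = c s"
  proof (cases "i \<in> s")
    case False
    have "sc_boundary (hcone i c) s = (\<Sum>j\<in>UNIV - s. epsg j s * hcone i c (insert j s))"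
      by (rule bd_eq)
    also have "\<dots> = epsg i s * hcone i c (insert i s)
        + (\<Sum>j\<in>(UNIV - s) - {i}. epsg j s * hcone i c (insert j s))"
      using False by (subst sum.remove[of _ i]) auto
    also have "(\<Sum>j\<in>(UNIV - s) - {i}. epsg j s * hcone i c (insert j s)) = 0"
      using False by (intro sum.neutral) (auto simp: hcone_def)
    also have "epsg i s * hcone i c (insert i s) = c s"
      using False by (simp add: hcone_def epsg_ins_self epsg_sq mult.assoc[symmetric])
    finally show ?thesis by simp
  next
    case True
    have "sc_boundary c (s - {i}) = 0" using cyc by simp
    hence "(\<Sum>j\<in>UNIV - (s - {i}). epsg j (s - {i}) * c (insert j (s - {i}))) = 0"
      by (simp add: bd_eq)
    moreover have "UNIV - (s - {i}) = insert i (UNIV - s)" using True by auto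
    ultimately have z: "epsg i (s - {i}) * c s
       + (\<Sum>j\<in>UNIV - s. epsg j (s - {i}) * c (insert j (s - {i}))) = 0"
      using True by (simp add: insert_absorb)
    have "sc_boundary (hcone i c) s = (\<Sum>j\<in>UNIV - s. epsg j s * hcone i c (insert j s))"
      by (rule bd_eq)
    also have "\<dots> = (\<Sum>j\<in>UNIV - s. - epsg i s * (epsg j (s - {i}) * c (insert j (s - {i}))))"
    proof (rule sum.cong)
      fix j assume j: "j \<in> UNIV - s"
      hence ij: "j \<noteq> i" using True by auto
      have "insert j s - {i} = insert j (s - {i})" using ij by auto
      hence "epsg j s * hcone i c (insert j s) = (epsg j s * epsg i (insert j s)) * c (insert j (s - {i}))"
        using True by (simp add: hcone_def mult.assoc)
      also have "\<dots> = - epsg i s * (epsg j (s - {i}) * c (insert j (s - {i})))"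
        using epsg_swap[OF True, of j] j by simp
      finally show "epsg j s * hcone i c (insert j s) = - epsg i s * (epsg j (s - {i}) * c (insert j (s - {i})))" .
    qed simp
    also have "\<dots> = - epsg i s * (\<Sum>j\<in>UNIV - s. epsg j (s - {i}) * c (insert j (s - {i})))"
      by (simp add: sum_distrib_left)
    also have "\<dots> = epsg i s * (epsg i (s - {i}) * c s)" proof -
      have "(\<Sum>j\<in>UNIV - s. epsg j (s - {i}) * c (insert j (s - {i}))) = - (epsg i (s - {i}) * c s)"
        using z by linarith
      thus ?thesis by simp
    qed
    also have "\<dots> = c s" by (simp add: epsg_rem_self epsg_sq mult.assoc[symmetric])
    finally show ?thesis .
  qed
qed

lemma cone_acyclic:
  fixes K :: "'n::{finite,linorder} set set"
  assumes cone: "\<And>I. I \<in> K \<Longrightarrow> insert i I \<in> K"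
  shows "\<not> nontrivial_reduced_homology K"
proof -
  have "\<exists>b. sc_chain K (Suc n) b \<and> sc_boundary b = c"
    if ch: "sc_chain K n c" and cy: "sc_boundary c = (\<lambda>_. 0)" for n c
  proof (intro exI conjI)
    show "sc_boundary (hcone i c) = c" by (rule hcone_bd[OF cy])
    show "sc_chain K (Suc n) (hcone i c)"
      unfolding sc_chain_def
    proof (intro allI impI)
      fix s assume "hcone i c s \<noteq> 0"
      hence is_: "i \<in> s" and nz: "c (s - {i}) \<noteq> 0" by (auto simp: hcone_def split: if_splits)
      from ch nz have "s - {i} \<in> K" "card (s - {i}) = n" by (auto simp: sc_chain_def)
      moreover have "insert i (s - {i}) = s" using is_ by auto
      ultimately show "s \<in> K \<and> card s = Suc n"
        using cone[of "s - {i}"] is_ by (metis card_Suc_Diff1 finite)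
    qed
  qed
  thus ?thesis unfolding nontrivial_reduced_homology_def by blast
qed

lemma comp_ind: "(p + e *\<^sub>R (\<Sum>i\<in>I. axis i (1::real))) $ k = p$k + (if k \<in> I then e else 0)"
  by (simp add: axis_def)

lemma gen_closed:
  assumes "finite V"
  shows "closed (generated (V :: (real^'n) set))"
proof -
  have "generated V = (\<Union>v\<in>V. \<Inter>k. {x. v$k \<le> x$k})"
    unfolding generated_def dom_le_def by auto
  moreover have "closed (\<Union>v\<in>V. \<Inter>k. {x::real^'n. v$k \<le> x$k})"
    using assms by (intro closed_UN closed_INT ballI closed_Collect_le continuous_intros) auto
  ultimately show ?thesis by simp
qed

lemma interior_gen:
  "interior (generated (V :: (real^'n) set)) = {x. \<exists>v\<in>V. dom_gt x v}"
proof
  show "{x. \<exists>v\<in>V. dom_gt x v} \<subseteq> interior (generated V)"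
  proof
    fix x assume "x \<in> {x. \<exists>v\<in>V. dom_gt x v}"
    then obtain v where v: "v \<in> V" "dom_gt x v" by auto
    let ?O = "\<Inter>k. {y::real^'n. v$k < y$k}"
    have "open ?O" by (intro open_INT ballI open_Collect_less continuous_intros) auto
    moreover have "?O \<subseteq> generated V"
      using v(1) unfolding generated_def dom_le_def by (auto intro: less_imp_le)
    moreover have "x \<in> ?O" using v(2) unfolding dom_gt_def by auto
    ultimately show "x \<in> interior (generated V)" by (meson interior_maximal subsetD)
  qed
next
  show "interior (generated V) \<subseteq> {x. \<exists>v\<in>V. dom_gt x v}"
  proof
    fix x assume "x \<in> interior (generated V)"
    then obtain e where e: "e > 0" "ball x e \<subseteq> generated V" by (auto simp: mem_interior)
    define one :: "real^'n" where "one = (\<chi> k. 1)"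
    define d where "d = e / (2 * (norm one + 1))"
    have h2: "0 < 2*(norm one + 1)" by (simp add: add_nonneg_pos)
    have dpos: "d > 0" unfolding d_def by (rule divide_pos_pos[OF e(1) h2])
    have "d * norm one < e"
    proof -
      have "d * norm one \<le> d * (norm one + 1)" using dpos by simp
      also have "\<dots> = e / 2" using h2 unfolding d_def by (simp add: divide_simps)
      finally show ?thesis using e by simp
    qed
    hence "x - d *\<^sub>R one \<in> ball x e" using dpos by (simp add: dist_norm)
    hence "x - d *\<^sub>R one \<in> generated V" using e(2) by blast
    then obtain v where v: "v \<in> V" "dom_le v (x - d *\<^sub>R one)"
      unfolding generated_def by auto
    have "dom_gt x v" unfolding dom_gt_def
    proof
      fix k
      have "v$k \<le> x$k - d" using v(2) unfolding dom_le_def one_def by simp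
      thus "x$k > v$k" using dpos by simp
    qed
    thus "x \<in> {x. \<exists>v\<in>V. dom_gt x v}" using v(1) by auto
  qed
qed

lemma S_char:
  assumes "finite V"
  shows "x \<in> orth_surface (V :: (real^'n) set) \<longleftrightarrow> (\<exists>v\<in>V. dom_le v x) \<and> \<not> (\<exists>v\<in>V. dom_gt x v)"
  unfolding orth_surface_def frontier_def closure_closed[OF gen_closed[OF assms]] interior_gen
  by (auto simp: generated_def)

lemma cone_geom:
  fixes V :: "(real^'n) set"
  assumes fin: "finite V" and pS: "p \<in> orth_surface V"
    and nf: "\<And>F. is_i_flat V i F \<Longrightarrow> p \<notin> F"
    and ID: "I \<in> Delta_p V p"
  shows "insert i I \<in> Delta_p V p"
proof (cases "i \<in> I")
  case True thus ?thesis using ID by (simp add: insert_absorb)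
next
  case iI: False
  let ?w = "\<lambda>J. (\<Sum>k\<in>J. axis k (1::real)) :: real^'n"
  from ID obtain \<epsilon> where ep: "\<epsilon> > 0" "p + \<epsilon> *\<^sub>R ?w I \<in> orth_surface V"
    unfolding Delta_p_def by auto
  from pS obtain v0 where v0: "v0 \<in> V" "dom_le v0 p" using S_char[OF fin] by auto
  have box: "p + d *\<^sub>R ?w I \<in> orth_surface V" if d: "0 < d" "d \<le> \<epsilon>" for d
  proof -
    have "dom_le v0 (p + d *\<^sub>R ?w I)" using v0(2) d unfolding dom_le_def
      by (auto simp: comp_ind axis_def intro: order_trans)
    moreover have "\<not> dom_gt (p + d *\<^sub>R ?w I) v" if "v \<in> V" for v
    proof
      assume "dom_gt (p + d *\<^sub>R ?w I) v"
      hence h: "p$k + (if k \<in> I then d else 0) > v$k" for k unfolding dom_gt_def comp_ind by blast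
      have "p$k + (if k \<in> I then \<epsilon> else 0) > v$k" for k
        using h[of k] d by (cases "k \<in> I") auto
      hence "dom_gt (p + \<epsilon> *\<^sub>R ?w I) v" unfolding dom_gt_def comp_ind by blast
      thus False using ep(2) that S_char[OF fin] by blast
    qed
    ultimately show ?thesis using v0(1) S_char[OF fin] by blast
  qed
  define D where "D = (\<lambda>(v,k). v$k - p$k) ` {(v,k). v \<in> V \<and> p$k < v$k}"
  have finD: "finite (insert \<epsilon> D)"
  proof -
    have "{(v,k). v \<in> V \<and> p$k < v$k} \<subseteq> V \<times> UNIV" by auto
    hence "finite {(v,k). v \<in> V \<and> p$k < v$k}" using fin by (meson finite_SigmaI finite finite_subset)
    thus ?thesis unfolding D_def by simp
  qed
  define m where "m = Min (insert \<epsilon> D)"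
  have mpos: "m > 0" unfolding m_def using finD ep(1)
    by (subst Min_gr_iff) (auto simp: D_def)
  have mle: "m \<le> \<epsilon>" unfolding m_def using finD by simp
  have mD: "m \<le> v$k - p$k" if "v \<in> V" "p$k < v$k" for v k
    unfolding m_def using finD that by (intro Min_le) (auto simp: D_def)
  define d where "d = m / 2"
  have dpos: "d > 0" and dle: "d \<le> \<epsilon>" using mpos mle by (auto simp: d_def)
  have dD: "p$k + d > v$k \<Longrightarrow> v \<in> V \<Longrightarrow> p$k \<ge> v$k" for v k
    using mD[of v k] mpos unfolding d_def by force
  have "p + d *\<^sub>R ?w (insert i I) \<in> orth_surface V"
  proof (rule ccontr)
    assume nS: "p + d *\<^sub>R ?w (insert i I) \<notin> orth_surface V"
    have "dom_le v0 (p + d *\<^sub>R ?w (insert i I))" using v0(2) dpos unfolding dom_le_def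
      by (auto simp: comp_ind axis_def intro: order_trans)
    with nS v0(1) obtain v where v: "v \<in> V" "dom_gt (p + d *\<^sub>R ?w (insert i I)) v"
      using S_char[OF fin] by blast
    have ge: "p$k \<ge> v$k" for k
    proof -
      have "p$k + (if k \<in> insert i I then d else 0) > v$k"
        using v(2) unfolding dom_gt_def comp_ind by blast
      hence "p$k + d > v$k" using dpos by (cases "k \<in> insert i I") auto
      thus ?thesis using dD v(1) by blast
    qed
    have gt: "p$k > v$k" if "k \<notin> insert i I" for k
    proof -
      have "p$k + (if k \<in> insert i I then d else 0) > v$k"
        using v(2) unfolding dom_gt_def comp_ind by blast
      thus ?thesis using that by simp
    qed
    have "\<not> dom_gt (p + d *\<^sub>R ?w I) v"
      using box[OF dpos dle] v(1) S_char[OF fin] by blast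
    then obtain k where k: "(p + d *\<^sub>R ?w I)$k \<le> v$k" unfolding dom_gt_def by (auto simp: not_less)
    have "k = i"
    proof (rule ccontr)
      assume "k \<noteq> i"
      thus False using k ge[of k] gt[of k] dpos by (auto simp: comp_ind axis_def split: if_splits)
    qed
    hence pi: "p$i = v$i" using k ge[of i] iI by (simp add: comp_ind axis_def)
    define y where "y = (\<lambda>n::nat. p + (d * inverse (real (Suc n))) *\<^sub>R ?w I)"
    have yU: "y n \<in> U_flat V i v" for n
    proof -
      have pos: "d * inverse (real (Suc n)) > 0" using dpos by simp
      have le: "d * inverse (real (Suc n)) \<le> \<epsilon>"
      proof -
        have "d * inverse (real (Suc n)) \<le> d * 1"
          using dpos by (intro mult_left_mono) (auto simp: field_simps)
        thus ?thesis using dle by simp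
      qed
      have "dom_gt_i i (y n) v"
        unfolding dom_gt_i_def y_def comp_ind
        apply (intro conjI allI impI)
         apply (simp add: pi iI)
        subgoal for j using ge[of j] gt[of j] pos by (cases "j \<in> I") auto
        done
      thus ?thesis using box[OF pos le] unfolding U_flat_def y_def by simp
    qed
    have "y \<longlonglongrightarrow> p + 0 *\<^sub>R ?w I"
      unfolding y_def
      by (intro tendsto_intros tendsto_mult_right_zero LIMSEQ_inverse_real_of_nat)
    hence lim: "y \<longlonglongrightarrow> p" by simp
    have sub: "U_flat V i v \<subseteq> \<Union> {U_flat V i w | w. w \<in> V \<and> (sim_i V i)\<^sup>*\<^sup>* w v}"
      using v(1) by blast
    hence "p \<in> i_flat_of V i v"
      proof -
      have "p \<in> closure (U_flat V i v)" unfolding closure_sequential using yU lim by blast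
      thus ?thesis unfolding i_flat_of_def using closure_mono[OF sub] by blast
    qed
    moreover have "is_i_flat V i (i_flat_of V i v)" using v(1) unfolding is_i_flat_def by blast
    ultimately show False using nf by blast
  qed
  thus ?thesis unfolding Delta_p_def using dpos by blast
qed

theorem lemma4p10:
  fixes V :: "(real^('n::{finite,linorder})) set" and p :: "real^('n::{finite,linorder})"
  assumes "finite V" and "antichain_dom V" and "p \<in> orth_surface V"
    and "syzygy_point V p"
  shows "characteristic_point V p"
  unfolding characteristic_point_def
proof (intro conjI allI)
  show "p \<in> orth_surface V" by fact
  fix i
  show "\<exists>F. is_i_flat V i F \<and> p \<in> F"
  proof (rule ccontr)
    assume "\<not> (\<exists>F. is_i_flat V i F \<and> p \<in> F)"
    hence "\<And>I. I \<in> Delta_p V p \<Longrightarrow> insert i I \<in> Delta_p V p"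
      using cone_geom[OF assms(1) assms(3)] by blast
    hence "\<not> nontrivial_reduced_homology (Delta_p V p)" by (rule cone_acyclic)
    thus False using assms(4) unfolding syzygy_point_def by blast
  qed
qed

end
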